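(* Let $G=(V,E,p)$ be an influence graph that is an in-arborescence. Then for every partial realization $\psi$ under full-adoption feedback, $|\partial(\psi)|\le|{\rm dom}(\psi)|$.
   Context: An in-arborescence is an influence graph whose underlying graph is a directed tree with a root $r$ such that for every node $v$ the unique path between $v$ and $r$ is directed from $v$ to $r$. IC model: each edge has a probability $p_{uv}$; a realization $\phi$ contains each edge independently with probability $p_{uv}$. Full-adoption feedback: selecting $u$ as a seed reveals the live/blocked status of all out-going edges of every node reachable from $u$ in $\phi$. A partial realization $\psi$ records the seeds selected so far (the set ${\rm dom}(\psi)$) with their feedback; $\Gamma(\psi)$ is the set of nodes reachable from ${\rm dom}(\psi)$ through live edges (determined by $\psi$). The boundary $\partial(\psi)$ is a subset of $\Gamma(\psi)$ of minimum cardinality such that $G$ has no directed edge from $\Gamma(\psi)\setminus\partial(\psi)$ to $V\setminus\Gamma(\psi)$ (ties broken arbitrarily). *)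

theory Defs
  imports Complex_Main
begin

definition influence_graph :: "'a set \<Rightarrow> ('a \<times> 'a) set \<Rightarrow> ('a \<times> 'a \<Rightarrow> real) \<Rightarrow> bool" where
  "influence_graph V E p \<longleftrightarrow> finite V \<and> E \<subseteq> V \<times> V \<and> (\<forall>e\<in>E. 0 \<le> p e \<and> p e \<le> 1)"

(* Underlying undirected graph is a tree: no loops, no antiparallel (duplicate undirected)
   edges, connected (implied by reachability of the root) and |E| = |V| - 1;
   every node v has a directed path v \<leadsto> r (this is then the unique tree path). *)
definition in_arborescence :: "'a set \<Rightarrow> ('a \<times> 'a) set \<Rightarrow> 'a \<Rightarrow> bool" where
  "in_arborescence V E r \<longleftrightarrow>
     finite V \<and> E \<subseteq> V \<times> V \<and> r \<in> V \<and>
     (\<forall>(u,v)\<in>E. u \<noteq> v \<and> (v,u) \<notin> E) \<and>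
     card E + 1 = card V \<and>
     (\<forall>v\<in>V. (v, r) \<in> E\<^sup>*)"

(* A realization (set of live edges) that has positive probability under the IC model. *)
definition realization :: "('a \<times> 'a) set \<Rightarrow> ('a \<times> 'a \<Rightarrow> real) \<Rightarrow> ('a \<times> 'a) set \<Rightarrow> bool" where
  "realization E p \<phi> \<longleftrightarrow> \<phi> \<subseteq> E \<and> (\<forall>e\<in>\<phi>. p e > 0) \<and> (\<forall>e\<in>E - \<phi>. p e < 1)"

(* \<Gamma>(\<psi>): nodes reachable from the seeds dom(\<psi>) through live edges of \<phi>.
   Under full-adoption feedback, this set is determined by \<psi>. *)
definition reached :: "('a \<times> 'a) set \<Rightarrow> 'a set \<Rightarrow> 'a set" where
  "reached \<phi> S = {v. \<exists>s\<in>S. (s, v) \<in> \<phi>\<^sup>*}"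

definition boundary_candidate :: "'a set \<Rightarrow> ('a \<times> 'a) set \<Rightarrow> 'a set \<Rightarrow> 'a set \<Rightarrow> bool" where
  "boundary_candidate V E \<Gamma> B \<longleftrightarrow> B \<subseteq> \<Gamma> \<and> (\<forall>(u,w)\<in>E. u \<in> \<Gamma> - B \<longrightarrow> w \<notin> V - \<Gamma>)"

definition is_boundary :: "'a set \<Rightarrow> ('a \<times> 'a) set \<Rightarrow> 'a set \<Rightarrow> 'a set \<Rightarrow> bool" where
  "is_boundary V E \<Gamma> B \<longleftrightarrow> boundary_candidate V E \<Gamma> B \<and>
     (\<forall>B'. boundary_candidate V E \<Gamma> B' \<longrightarrow> card B \<le> card B')"

end

theory Submission
  imports Defs
begin

lemma outdeg:
  assumes A: "in_arborescence V E r" and e1: "(u,w) \<in> E" and e2: "(u,w') \<in> E"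
  shows "w = w'"
proof (rule ccontr)
  assume ne: "w \<noteq> w'"
  from A have fin: "finite V" and sub: "E \<subseteq> V \<times> V" and rV: "r \<in> V"
    and cE: "card E + 1 = card V" and reach: "\<forall>v\<in>V. (v, r) \<in> E\<^sup>*"
    unfolding in_arborescence_def by auto
  have finE: "finite E" using fin sub finite_subset by blast
  have ex: "\<exists>x. (v,x) \<in> E" if "v \<in> V - {r}" for v
  proof -
    from that reach have "(v,r) \<in> E\<^sup>*" "v \<noteq> r" by auto
    then show ?thesis by (metis converse_rtranclE)
  qed
  define f where "f v = (v, if v = u then w else SOME x. (v,x) \<in> E)" for v
  have fE: "f ` (V - {r}) \<subseteq> E"
  proof
    fix e assume "e \<in> f ` (V - {r})"
    then obtain v where v: "v \<in> V - {r}" "e = f v" by auto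
    show "e \<in> E"
    proof (cases "v = u")
      case True then show ?thesis using v e1 by (simp add: f_def)
    next
      case False then show ?thesis using v ex[OF v(1)] by (simp add: f_def) (metis someI_ex)
    qed
  qed
  have inj: "inj_on f (V - {r})" unfolding inj_on_def f_def by auto
  define e0 where "e0 = (if u = r then (u,w) else (u,w'))"
  have e0E: "e0 \<in> E" using e1 e2 by (auto simp: e0_def)
  have e0n: "e0 \<notin> f ` (V - {r})"
  proof
    assume "e0 \<in> f ` (V - {r})"
    then obtain v where v: "v \<in> V - {r}" "e0 = f v" by auto
    then have "v = u" by (auto simp: f_def e0_def split: if_splits)
    then show False using v ne by (auto simp: f_def e0_def split: if_splits)
  qed
  have "card (insert e0 (f ` (V - {r}))) \<le> card E"
    using fE e0E finE by (intro card_mono) auto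
  moreover have "card (insert e0 (f ` (V - {r}))) = card (V - {r}) + 1"
    using e0n inj fin by (simp add: card_image)
  moreover have "card (V - {r}) + 1 = card V" using rV fin
    by (metis card_Suc_Diff1 Suc_eq_plus1)
  ultimately show False using cE by linarith
qed

lemma term_unique:
  assumes det: "\<And>a b c. (a,b) \<in> \<phi> \<Longrightarrow> (a,c) \<in> \<phi> \<Longrightarrow> b = c"
    and "(s,ta) \<in> \<phi>\<^sup>*"
  shows "(s,tb) \<in> \<phi>\<^sup>* \<Longrightarrow> \<not>(\<exists>x. (ta,x) \<in> \<phi>) \<Longrightarrow> \<not>(\<exists>x. (tb,x) \<in> \<phi>) \<Longrightarrow> ta = tb"
  using assms(2)
proof (induction arbitrary: tb rule: converse_rtrancl_induct)
  case base
  then show ?case by (metis converse_rtranclE)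
next
  case (step y z)
  from step.prems(1) show ?case
  proof (cases rule: converse_rtranclE)
    case base then show ?thesis using step by blast
  next
    case (step z')
    then have "z' = z" using det \<open>(y,z) \<in> \<phi>\<close> by blast
    then show ?thesis using step.IH step.prems step by blast
  qed
qed

theorem lemma3:
  fixes V :: "'a set" and E :: "('a \<times> 'a) set" and p :: "'a \<times> 'a \<Rightarrow> real"
    and r :: 'a and \<phi> :: "('a \<times> 'a) set" and S :: "'a set" and B :: "'a set"
  assumes "influence_graph V E p"
    and "in_arborescence V E r"
    and "realization E p \<phi>"
    and "S \<subseteq> V"
    and "is_boundary V E (reached \<phi> S) B"
  shows "card B \<le> card S"
proof -
  have phiE: "\<phi> \<subseteq> E" using assms(3) by (simp add: realization_def)
  have det: "\<And>a b c. (a,b) \<in> \<phi> \<Longrightarrow> (a,c) \<in> \<phi> \<Longrightarrow> b = c"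
    using outdeg[OF assms(2)] phiE by blast
  have finS: "finite S" using assms(2,4) finite_subset unfolding in_arborescence_def by blast
  define G where "G = reached \<phi> S"
  define B' where "B' = {t \<in> G. \<not>(\<exists>x. (t,x) \<in> \<phi>)}"
  have cand: "boundary_candidate V E G B'"
    unfolding boundary_candidate_def
  proof (intro conjI ballI impI)
    show "B' \<subseteq> G" by (auto simp: B'_def)
  next
    fix e assume eE: "e \<in> E"
    obtain u w' where e: "e = (u,w')" by fastforce
    show "case e of (u, w) \<Rightarrow> u \<in> G - B' \<longrightarrow> w \<notin> V - G"
    proof -
      have "w' \<in> G" if "u \<in> G" "u \<notin> B'"
      proof -
      from that
      obtain x where ux: "(u,x) \<in> \<phi>" and uG: "u \<in> G" by (auto simp: B'_def)
      then have "x = w'" using outdeg[OF assms(2)] phiE eE e by blast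
      moreover have "x \<in> G"
      proof -
        from uG obtain s where "s \<in> S" "(s,u) \<in> \<phi>\<^sup>*" unfolding G_def reached_def by blast
        then have "(s,x) \<in> \<phi>\<^sup>*" using ux by simp
        then show ?thesis using \<open>s \<in> S\<close> unfolding G_def reached_def by blast
      qed
      ultimately show "w' \<in> G" by simp
      qed
      then show ?thesis by (auto simp: e)
    qed
  qed
  have "card B \<le> card B'" using assms(5) cand unfolding is_boundary_def G_def by blast
  moreover have "card B' \<le> card S"
  proof -
    define g where "g t = (SOME s. s \<in> S \<and> (s,t) \<in> \<phi>\<^sup>*)" for t
    have g: "g t \<in> S \<and> (g t, t) \<in> \<phi>\<^sup>*" if "t \<in> B'" for t
    proof -
      have "\<exists>s. s \<in> S \<and> (s,t) \<in> \<phi>\<^sup>*" using that by (auto simp: B'_def G_def reached_def)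
      then show ?thesis unfolding g_def by (rule someI_ex)
    qed
    have "inj_on g B'"
    proof (rule inj_onI)
      fix a b assume ab: "a \<in> B'" "b \<in> B'" "g a = g b"
      show "a = b"
        using term_unique[OF det, where s="g a" and ta=a and tb=b] g[OF ab(1)] g[OF ab(2)] ab
        by (auto simp: B'_def)
    qed
    moreover have "g ` B' \<subseteq> S" using g by auto
    ultimately show ?thesis using finS by (meson card_inj_on_le)
  qed
  ultimately show ?thesis by simp
qed

end
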